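(* Let $\widetilde{\mathrm{Sp}}_{2r}^{(n)}$ be the $n$-fold Brylinski--Deligne cover of $\mathrm{Sp}_{2r}$ associated with the Weyl-invariant quadratic form $Q$ on the cocharacter lattice $Y$ normalized by $Q(\alpha_r^\vee)=1$, where $\alpha_r$ is the long simple root. If $4\mid n$, then $\widetilde{\mathrm{Sp}}_{2r}^{(n)}$ is persistent.
   Context: Root datum $(X,\Phi,\Delta;Y,\Phi^\vee,\Delta^\vee)$ of $\mathrm{Sp}_{2r}$, Weyl group $W$, $\rho^\vee$ the half-sum of positive coroots. $B_Q(y,z)=Q(y+z)-Q(y)-Q(z)$, $Y_{Q,n}=\{y\in Y:B_Q(y,z)\in n\mathbf Z\ \forall z\in Y\}$, $n_\alpha=n/\gcd(n,Q(\alpha^\vee))$, $Y^{sc}_{Q,n}$ the lattice spanned by $\{n_\alpha\alpha^\vee:\alpha\in\Delta\}$. $W$ acts on $\mathscr X_{Q,n}=Y/Y_{Q,n}$ and $\mathscr X^{sc}_{Q,n}=Y/Y^{sc}_{Q,n}$ by the twisted action $w[y]=w(y-\rho^\vee)+\rho^\vee$. The cover is persistent if for every $y\in Y$, the stabilizer in $W$ of the image of $y$ in $\mathscr X^{sc}_{Q,n}$ equals the stabilizer of the image of $y$ in $\mathscr X_{Q,n}$. *)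

theory Defs
  imports Complex_Main "HOL-Library.Function_Algebras"
begin

text \<open>Vectors of X and Y (and their rational
  extensions) are functions nat => rat supported on the coordinates 0..r-1; the standard
  basis vector e_i is sp_e i. Coordinates are 0-indexed, so the long simple root alpha_r
  of the paper is 2 e_{r-1} here, with coroot e_{r-1}.\<close>

definition sp_e :: "nat \<Rightarrow> nat \<Rightarrow> rat" where
  "sp_e i = (\<lambda>j. if j = i then 1 else 0)"

definition sp_smul :: "rat \<Rightarrow> (nat \<Rightarrow> rat) \<Rightarrow> (nat \<Rightarrow> rat)" where
  "sp_smul c v = (\<lambda>j. c * v j)"

definition sp_Y :: "nat \<Rightarrow> (nat \<Rightarrow> rat) set" where
  "sp_Y r = {y. (\<forall>i. y i \<in> \<int>) \<and> (\<forall>i\<ge>r. y i = 0)}"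

definition sp_pair :: "nat \<Rightarrow> (nat \<Rightarrow> rat) \<Rightarrow> (nat \<Rightarrow> rat) \<Rightarrow> rat" where
  "sp_pair r x y = (\<Sum>i<r. x i * y i)"

definition sp_pos_roots :: "nat \<Rightarrow> ((nat \<Rightarrow> rat) \<times> (nat \<Rightarrow> rat)) set" where
  "sp_pos_roots r =
     {(sp_e i - sp_e j, sp_e i - sp_e j) | i j. i < j \<and> j < r}
   \<union> {(sp_e i + sp_e j, sp_e i + sp_e j) | i j. i < j \<and> j < r}
   \<union> {(sp_smul 2 (sp_e i), sp_e i) | i. i < r}"

definition sp_roots :: "nat \<Rightarrow> ((nat \<Rightarrow> rat) \<times> (nat \<Rightarrow> rat)) set" where
  "sp_roots r = sp_pos_roots r \<union> {(- a, - c) | a c. (a, c) \<in> sp_pos_roots r}"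

definition sp_simple_coroot :: "nat \<Rightarrow> nat \<Rightarrow> (nat \<Rightarrow> rat)" where
  "sp_simple_coroot r i = (if i + 1 < r then sp_e i - sp_e (i + 1) else sp_e i)"

definition sp_refl :: "nat \<Rightarrow> (nat \<Rightarrow> rat) \<times> (nat \<Rightarrow> rat) \<Rightarrow> (nat \<Rightarrow> rat) \<Rightarrow> (nat \<Rightarrow> rat)" where
  "sp_refl r p y = y - sp_smul (sp_pair r (fst p) y) (snd p)"

inductive_set sp_Weyl :: "nat \<Rightarrow> ((nat \<Rightarrow> rat) \<Rightarrow> (nat \<Rightarrow> rat)) set" for r where
  id_in: "id \<in> sp_Weyl r"
| refl_in: "w \<in> sp_Weyl r \<Longrightarrow> p \<in> sp_roots r \<Longrightarrow> sp_refl r p \<circ> w \<in> sp_Weyl r"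

definition sp_rho :: "nat \<Rightarrow> (nat \<Rightarrow> rat)" where
  "sp_rho r = sp_smul (1/2) (\<Sum>p\<in>sp_pos_roots r. snd p)"

definition sp_twisted :: "nat \<Rightarrow> ((nat \<Rightarrow> rat) \<Rightarrow> (nat \<Rightarrow> rat)) \<Rightarrow> (nat \<Rightarrow> rat) \<Rightarrow> (nat \<Rightarrow> rat)" where
  "sp_twisted r w y = w (y - sp_rho r) + sp_rho r"

definition sp_Q :: "nat \<Rightarrow> (nat \<Rightarrow> rat) \<Rightarrow> rat" where
  "sp_Q r y = (\<Sum>i<r. (y i)^2)"

definition sp_BQ :: "nat \<Rightarrow> (nat \<Rightarrow> rat) \<Rightarrow> (nat \<Rightarrow> rat) \<Rightarrow> rat" where
  "sp_BQ r y z = sp_Q r (y + z) - sp_Q r y - sp_Q r z"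

definition sp_YQn :: "nat \<Rightarrow> nat \<Rightarrow> (nat \<Rightarrow> rat) set" where
  "sp_YQn r n = {y \<in> sp_Y r. \<forall>z\<in>sp_Y r. \<exists>k::int. sp_BQ r y z = of_int (int n * k)}"

definition sp_nalpha :: "nat \<Rightarrow> nat \<Rightarrow> nat \<Rightarrow> rat" where
  "sp_nalpha r n i = of_nat n / of_int (gcd (int n) \<lfloor>sp_Q r (sp_simple_coroot r i)\<rfloor>)"

definition sp_Ysc :: "nat \<Rightarrow> nat \<Rightarrow> (nat \<Rightarrow> rat) set" where
  "sp_Ysc r n = {(\<Sum>i<r. sp_smul (of_int (k i) * sp_nalpha r n i) (sp_simple_coroot r i)) | k :: nat \<Rightarrow> int. True}"

definition sp_stab :: "nat \<Rightarrow> (nat \<Rightarrow> rat) set \<Rightarrow> (nat \<Rightarrow> rat) \<Rightarrow> ((nat \<Rightarrow> rat) \<Rightarrow> (nat \<Rightarrow> rat)) set" where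
  "sp_stab r L y = {w \<in> sp_Weyl r. sp_twisted r w y - y \<in> L}"

definition sp_persistent :: "nat \<Rightarrow> nat \<Rightarrow> bool" where
  "sp_persistent r n = (\<forall>y\<in>sp_Y r. sp_stab r (sp_Ysc r n) y = sp_stab r (sp_YQn r n) y)"

end

theory Submission
  imports Defs
begin

lemma sum_app: "(\<Sum>a\<in>A. f a) x = (\<Sum>a\<in>A. f a x)"
proof (cases "finite A")
  case True then show ?thesis by (induction A rule: finite_induct) auto
next
  case False then show ?thesis by simp
qed

lemma Q_sub: "sp_Q r (y - sp_smul s c) = sp_Q r y - 2 * s * sp_pair r c y + s^2 * sp_Q r c"
proof -
  have "sp_Q r (y - sp_smul s c) = (\<Sum>i<r. (y i)^2 - 2 * s * (c i * y i) + s^2 * (c i)^2)"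
    unfolding sp_Q_def sp_smul_def by (intro sum.cong) (auto simp: power2_eq_square algebra_simps)
  also have "\<dots> = sp_Q r y - 2 * s * sp_pair r c y + s^2 * sp_Q r c"
    unfolding sp_Q_def sp_pair_def by (simp add: sum.distrib sum_subtractf sum_distrib_left)
  finally show ?thesis .
qed

lemma refl_Q:
  assumes "\<And>y. sp_pair r a y = t * sp_pair r c y" and "t * sp_Q r c = 2"
  shows "sp_Q r (sp_refl r (a,c) y) = sp_Q r y"
proof -
  have "sp_Q r (sp_refl r (a,c) y) = sp_Q r y - 2 * (t * sp_pair r c y) * sp_pair r c y + (t * sp_pair r c y)^2 * sp_Q r c"
    unfolding sp_refl_def by (simp add: Q_sub assms(1))
  also have "\<dots> = sp_Q r y - (sp_pair r c y)^2 * t * (2 - t * sp_Q r c)"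
    by (simp add: power2_eq_square algebra_simps)
  finally show ?thesis using assms(2) by simp
qed

lemma Q_e_diff: "i < r \<Longrightarrow> j < r \<Longrightarrow> i \<noteq> j \<Longrightarrow> sp_Q r (sp_e i - sp_e j) = 2"
proof -
  assume a: "i < r" "j < r" "i \<noteq> j"
  have "sp_Q r (sp_e i - sp_e j) = (\<Sum>k<r. (if k = i then 1 else 0) + (if k = j then 1 else 0))"
    unfolding sp_Q_def sp_e_def by (intro sum.cong) (use a in auto)
  also have "\<dots> = 2" using a by (simp add: sum.distrib)
  finally show ?thesis .
qed

lemma Q_e_sum: "i < r \<Longrightarrow> j < r \<Longrightarrow> i \<noteq> j \<Longrightarrow> sp_Q r (sp_e i + sp_e j) = 2"
proof -
  assume a: "i < r" "j < r" "i \<noteq> j"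
  have "sp_Q r (sp_e i + sp_e j) = (\<Sum>k<r. (if k = i then 1 else 0) + (if k = j then 1 else 0))"
    unfolding sp_Q_def sp_e_def by (intro sum.cong) (use a in auto)
  also have "\<dots> = 2" using a by (simp add: sum.distrib)
  finally show ?thesis .
qed

lemma Q_e: "i < r \<Longrightarrow> sp_Q r (sp_e i) = 1"
proof -
  assume a: "i < r"
  have "sp_Q r (sp_e i) = (\<Sum>k<r. (if k = i then 1 else 0))"
    unfolding sp_Q_def sp_e_def by (intro sum.cong) auto
  then show ?thesis using a by simp
qed

lemma pair_neg: "sp_pair r (- a) y = - sp_pair r a y"
  unfolding sp_pair_def by (simp add: sum_negf)

lemma pair_smul: "sp_pair r (sp_smul t a) y = t * sp_pair r a y"
  unfolding sp_pair_def sp_smul_def by (simp add: sum_distrib_left mult.assoc)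

lemma refl_neg: "sp_refl r (- a, - c) = sp_refl r (a, c)"
  unfolding sp_refl_def sp_smul_def by (auto simp: pair_neg fun_eq_iff)

lemma Q_neg: "sp_Q r (- c) = sp_Q r c"
  unfolding sp_Q_def by simp

lemma pos_root_Q: "p \<in> sp_pos_roots r \<Longrightarrow> sp_Q r (sp_refl r p y) = sp_Q r y"
  unfolding sp_pos_roots_def
  apply (elim UnE CollectE exE conjE)
    apply (simp only:)
    apply (rule refl_Q[where t=1]; simp add: Q_e_diff)
   apply (simp only:)
   apply (rule refl_Q[where t=1]; simp add: Q_e_sum)
  apply (simp only:)
  apply (rule refl_Q[where t=2]; simp add: Q_e pair_smul)
  done

lemma root_Q: "p \<in> sp_roots r \<Longrightarrow> sp_Q r (sp_refl r p y) = sp_Q r y"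
  unfolding sp_roots_def
  by (auto simp: pos_root_Q refl_neg dest: pos_root_Q)

lemma weyl_Q: "w \<in> sp_Weyl r \<Longrightarrow> sp_Q r (w v) = sp_Q r v"
  by (induction rule: sp_Weyl.induct) (auto simp: root_Q)


lemma inj_A: "inj_on (\<lambda>(i,j). (sp_e i - sp_e j, sp_e i - sp_e j)) {(i,j). i<j \<and> j<(r::nat)}"
proof (rule inj_onI, clarsimp)
  fix i j a b :: nat
  assume h: "i < j" "a < b" "sp_e i - sp_e j = sp_e a - sp_e b"
  have 1: "(sp_e i - sp_e j) i = (sp_e a - sp_e b) i" and 2: "(sp_e i - sp_e j) j = (sp_e a - sp_e b) j"
    using h(3) by simp_all
  from 1 2 h(1,2) show "i = a \<and> j = b" by (auto simp: sp_e_def split: if_splits)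
qed

lemma inj_B: "inj_on (\<lambda>(i,j). (sp_e i + sp_e j, sp_e i + sp_e j)) {(i,j). i<j \<and> j<(r::nat)}"
proof (rule inj_onI, clarsimp)
  fix i j a b :: nat
  assume h: "i < j" "a < b" "sp_e i + sp_e j = sp_e a + sp_e b"
  have 1: "(sp_e i + sp_e j) i = (sp_e a + sp_e b) i" and 2: "(sp_e i + sp_e j) j = (sp_e a + sp_e b) j"
    using h(3) by simp_all
  from 1 2 h(1,2) show "i = a \<and> j = b" by (auto simp: sp_e_def split: if_splits)
qed

lemma inj_C: "inj_on (\<lambda>i. (sp_smul 2 (sp_e i), sp_e i)) {..<r}"
proof (rule inj_onI, clarsimp)
  fix i a :: nat
  assume h: "sp_e i = sp_e a"
  have "sp_e i i = sp_e a i" using h by simp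
  then show "i = a" by (auto simp: sp_e_def split: if_splits)
qed

lemma pos_roots_eq: "sp_pos_roots r =
   (\<lambda>(i,j). (sp_e i - sp_e j, sp_e i - sp_e j)) ` {(i,j). i<j \<and> j<r}
 \<union> (\<lambda>(i,j). (sp_e i + sp_e j, sp_e i + sp_e j)) ` {(i,j). i<j \<and> j<r}
 \<union> (\<lambda>i. (sp_smul 2 (sp_e i), sp_e i)) ` {..<r}"
  unfolding sp_pos_roots_def by auto

lemma rho_val:
  assumes k: "k < r"
  shows "sp_rho r k = of_nat (r - k) - 1/2"
proof -
  define I2 where "I2 = {(i,j). i<j \<and> j<(r::nat)}"
  define A where "A = (\<lambda>(i,j). (sp_e i - sp_e j, sp_e i - sp_e j)) ` I2"
  define B where "B = (\<lambda>(i,j). (sp_e i + sp_e j, sp_e i + sp_e j)) ` I2"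
  define C where "C = (\<lambda>i. (sp_smul 2 (sp_e i), sp_e i)) ` {..<r}"
  have fI2: "finite I2" unfolding I2_def
    by (rule finite_subset[of _ "{..<r} \<times> {..<r}"]) auto
  have fin: "finite A" "finite B" "finite C" unfolding A_def B_def C_def using fI2 by auto
  have dAB: "A \<inter> B = {}"
  proof (rule ccontr)
    assume "A \<inter> B \<noteq> {}"
    then obtain i j a b where h: "i < j" "a < b" "sp_e i - sp_e j = sp_e a + sp_e b"
      unfolding A_def B_def I2_def by auto
    have "(sp_e i - sp_e j) j = (sp_e a + sp_e b) j" using h(3) by simp
    then show False using h by (auto simp: sp_e_def split: if_splits)
  qed
  have dAC: "(A \<union> B) \<inter> C = {}"
  proof (rule ccontr)
    assume "(A \<union> B) \<inter> C \<noteq> {}"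
    then obtain i j a where h: "i < j" "sp_e a = sp_e i - sp_e j \<or> sp_e a = sp_e i + sp_e j"
      unfolding A_def B_def C_def I2_def by auto
    have "(sp_e i - sp_e j) j = sp_e a j \<or> ((sp_e i + sp_e j) j = sp_e a j \<and> (sp_e i + sp_e j) i = sp_e a i)"
      using h(2) by auto
    then show False using h by (auto simp: sp_e_def split: if_splits)
  qed
  have "(\<Sum>p\<in>sp_pos_roots r. snd p) k = (\<Sum>p\<in>A \<union> B \<union> C. snd p k)"
    unfolding pos_roots_eq A_def B_def C_def I2_def sum_app ..
  also have "\<dots> = (\<Sum>p\<in>A. snd p k) + (\<Sum>p\<in>B. snd p k) + (\<Sum>p\<in>C. snd p k)"
    using fin dAB dAC by (simp add: sum.union_disjoint)
  also have "(\<Sum>p\<in>A. snd p k) = (\<Sum>(i,j)\<in>I2. sp_e i k - sp_e j k)"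
    unfolding A_def I2_def by (subst sum.reindex[OF inj_A]) (simp add: case_prod_unfold)
  also have "(\<Sum>p\<in>B. snd p k) = (\<Sum>(i,j)\<in>I2. sp_e i k + sp_e j k)"
    unfolding B_def I2_def by (subst sum.reindex[OF inj_B]) (simp add: case_prod_unfold)
  also have "(\<Sum>p\<in>C. snd p k) = (\<Sum>i<r. sp_e i k)"
    unfolding C_def by (subst sum.reindex[OF inj_C]) simp
  also have "(\<Sum>i<r. sp_e i k) = 1"
    using k unfolding sp_e_def by (simp add: eq_commute[of k])
  also have "(\<Sum>(i,j)\<in>I2. sp_e i k - sp_e j k) + (\<Sum>(i,j)\<in>I2. sp_e i k + sp_e j k)
      = (\<Sum>p\<in>I2. if fst p = k then 2 else 0)"
    by (simp add: sum.distrib[symmetric] case_prod_unfold sp_e_def) (intro sum.cong, auto)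
  also have "\<dots> = (\<Sum>p\<in>{p\<in>I2. fst p = k}. 2)"
    using fI2 by (simp only: sum.inter_filter)
  also have "{p\<in>I2. fst p = k} = {k} \<times> {k<..<r}"
    unfolding I2_def by auto
  also have "(\<Sum>p\<in>{k} \<times> {k<..<r}. (2::rat)) = 2 * of_nat (r - k - 1)"
    by simp
  finally have "(\<Sum>p\<in>sp_pos_roots r. snd p) k = 2 * of_nat (r - k - 1) + 1" .
  then show ?thesis unfolding sp_rho_def sp_smul_def using k by (simp add: of_nat_diff)
qed


lemma BQ_eq: "sp_BQ r y z = 2 * sp_pair r y z"
  unfolding sp_BQ_def sp_Q_def sp_pair_def
  by (simp add: power2_sum sum.distrib sum_distrib_left mult.assoc)

lemma e_in_Y: "i < r \<Longrightarrow> sp_e i \<in> sp_Y r"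
  unfolding sp_Y_def sp_e_def by auto

lemma YQn_char:
  assumes n: "n = 2 * N"
  shows "D \<in> sp_YQn r n \<longleftrightarrow> D \<in> sp_Y r \<and> (\<forall>i. \<exists>m::int. D i = of_nat N * of_int m)"
proof
  assume h: "D \<in> sp_YQn r n"
  then have DY: "D \<in> sp_Y r" unfolding sp_YQn_def by auto
  have "\<exists>m::int. D i = of_nat N * of_int m" for i
  proof (cases "i < r")
    case True
    then obtain k :: int where "sp_BQ r D (sp_e i) = of_int (int n * k)"
      using h e_in_Y unfolding sp_YQn_def by blast
    moreover have "sp_BQ r D (sp_e i) = 2 * D i"
      unfolding BQ_eq sp_pair_def sp_e_def using True by (simp add: if_distrib cong: if_cong)
    ultimately have "D i = of_nat N * of_int k" using n by simp
    then show ?thesis by blast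
  next
    case False
    then have "D i = 0" using DY unfolding sp_Y_def by auto
    then show ?thesis by (intro exI[of _ 0]) simp
  qed
  then show "D \<in> sp_Y r \<and> (\<forall>i. \<exists>m::int. D i = of_nat N * of_int m)" using DY by blast
next
  assume h: "D \<in> sp_Y r \<and> (\<forall>i. \<exists>m::int. D i = of_nat N * of_int m)"
  then obtain M where M: "\<And>i. D i = of_nat N * of_int (M i)" by metis
  have "\<exists>k::int. sp_BQ r D z = of_int (int n * k)" if z: "z \<in> sp_Y r" for z
  proof -
    have zi: "z i = of_int \<lfloor>z i\<rfloor>" for i using z unfolding sp_Y_def by auto
    have "sp_BQ r D z = 2 * (\<Sum>i<r. of_nat N * of_int (M i) * of_int \<lfloor>z i\<rfloor>)"
      unfolding BQ_eq sp_pair_def by (metis (no_types, lifting) M zi)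
    also have "\<dots> = of_int (int n * (\<Sum>i<r. M i * \<lfloor>z i\<rfloor>))"
      using n by (simp add: sum_distrib_left mult.assoc)
    finally show ?thesis by blast
  qed
  then show "D \<in> sp_YQn r n" using h unfolding sp_YQn_def by blast
qed

definition cf :: "nat \<Rightarrow> nat \<Rightarrow> nat \<Rightarrow> int" where
  "cf r i j = (if i + 1 < r then (if j = i then 1 else 0) - (if j = i + 1 then 1 else 0)
               else (if j = i then 2 else 0))"

lemma nalpha_cf:
  assumes n: "n = 2 * N" and i: "i < r"
  shows "sp_nalpha r n i * sp_simple_coroot r i j = of_nat N * of_int (cf r i j)"
proof (cases "i + 1 < r")
  case True
  have "sp_Q r (sp_simple_coroot r i) = 2"
    using True by (simp add: sp_simple_coroot_def Q_e_diff)
  moreover have "gcd (int n) 2 = 2" using n by simp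
  ultimately have "sp_nalpha r n i = of_nat N" unfolding sp_nalpha_def using n by simp
  then show ?thesis using True by (simp add: sp_simple_coroot_def cf_def sp_e_def)
next
  case False
  have "sp_Q r (sp_simple_coroot r i) = 1"
    using False i by (simp add: sp_simple_coroot_def Q_e)
  then have "sp_nalpha r n i = of_nat n" unfolding sp_nalpha_def by simp
  then show ?thesis using False n by (simp add: sp_simple_coroot_def cf_def sp_e_def)
qed

lemma Ysc_elem:
  assumes n: "n = 2 * N"
  shows "(\<Sum>i<r. sp_smul (of_int (k i) * sp_nalpha r n i) (sp_simple_coroot r i)) j
        = of_nat N * of_int (\<Sum>i<r. k i * cf r i j)"
proof -
  have "(\<Sum>i<r. sp_smul (of_int (k i) * sp_nalpha r n i) (sp_simple_coroot r i)) j
     = (\<Sum>i<r. of_int (k i) * (sp_nalpha r n i * sp_simple_coroot r i j))"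
    unfolding sum_app sp_smul_def by (simp add: mult.assoc)
  also have "\<dots> = (\<Sum>i<r. of_nat N * of_int (k i * cf r i j))"
    by (intro sum.cong refl) (simp add: nalpha_cf[OF n])
  finally show ?thesis by (simp add: sum_distrib_left)
qed

lemma cf_out: "i < r \<Longrightarrow> r \<le> j \<Longrightarrow> cf r i j = 0"
  unfolding cf_def by auto

lemma Ysc_sub:
  assumes n: "n = 2 * N"
  shows "sp_Ysc r n \<subseteq> sp_YQn r n"
proof
  fix D assume "D \<in> sp_Ysc r n"
  then obtain k where D: "D = (\<Sum>i<r. sp_smul (of_int (k i) * sp_nalpha r n i) (sp_simple_coroot r i))"
    unfolding sp_Ysc_def by blast
  have Dj: "D j = of_nat N * of_int (\<Sum>i<r. k i * cf r i j)" for j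
    unfolding D by (rule Ysc_elem[OF n])
  have "D j \<in> \<int>" for j
    unfolding Dj by (intro Ints_mult Ints_of_nat Ints_of_int)
  then have "D \<in> sp_Y r"
    unfolding sp_Y_def using Dj by (auto simp: cf_out)
  then show "D \<in> sp_YQn r n" unfolding YQn_char[OF n] using Dj by blast
qed

lemma cf_sum:
  assumes j: "j < Suc R" and ev: "even (\<Sum>l<Suc R. M l)"
  defines "k \<equiv> (\<lambda>i. if i < R then (\<Sum>l\<le>i. M l) else (\<Sum>l<Suc R. M l) div 2)"
  shows "(\<Sum>i<Suc R. k i * cf (Suc R) i j) = M j"
proof -
  have "(\<Sum>i<Suc R. k i * cf (Suc R) i j)
      = (\<Sum>i<R. k i * (if j = i then 1 else 0)) - (\<Sum>i<R. k i * (if j = Suc i then 1 else 0))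
        + k R * (if j = R then 2 else 0)"
    by (simp add: cf_def sum_subtractf[symmetric] right_diff_distrib)
  also have "(\<Sum>i<R. k i * (if j = i then 1 else 0)) = (if j < R then k j else 0)"
    by (simp add: if_distrib[of "\<lambda>x. k _ * x"] eq_commute[of j] cong: if_cong)
  also have "(\<Sum>i<R. k i * (if j = Suc i then 1 else 0)) = (if 0 < j \<and> j - 1 < R then k (j - 1) else 0)"
  proof (cases j)
    case 0 then show ?thesis by simp
  next
    case (Suc j')
    then show ?thesis by (simp add: if_distrib[of "\<lambda>x. k _ * x"] eq_commute[of j'] cong: if_cong)
  qed
  finally have e: "(\<Sum>i<Suc R. k i * cf (Suc R) i j) = (if j < R then k j else 0) -
     (if 0 < j \<and> j - 1 < R then k (j - 1) else 0) + k R * (if j = R then 2 else 0)" .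
  show ?thesis
  proof (cases "j < R")
    case True
    show ?thesis
    proof (cases j)
      case 0 then show ?thesis using e True by (simp add: k_def)
    next
      case (Suc j') then show ?thesis using e True by (simp add: k_def)
    qed
  next
    case False
    then have jR: "j = R" using j by simp
    have S2: "2 * ((\<Sum>l<Suc R. M l) div 2) = (\<Sum>l<Suc R. M l)" using ev by simp
    show ?thesis
    proof (cases R)
      case 0 then show ?thesis using e jR S2 by (simp add: k_def cf_def)
    next
      case (Suc R')
      have "(\<Sum>l\<le>R'. M l) = (\<Sum>l<R. M l)" using Suc by (simp add: lessThan_Suc_atMost)
      then show ?thesis using e jR S2 Suc by (simp add: k_def)
    qed
  qed
qed


lemma Ysc_sup:
  assumes n: "n = 2 * N" and DY: "D \<in> sp_Y (Suc R)" and M: "\<And>i. D i = of_nat N * of_int (M i)"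
    and ev: "even (\<Sum>l<Suc R. M l)"
  shows "D \<in> sp_Ysc (Suc R) n"
proof -
  define k where "k \<equiv> (\<lambda>i. if i < R then (\<Sum>l\<le>i. M l) else (\<Sum>l<Suc R. M l) div 2)"
  have "D = (\<Sum>i<Suc R. sp_smul (of_int (k i) * sp_nalpha (Suc R) n i) (sp_simple_coroot (Suc R) i))"
  proof
    fix j
    show "D j = (\<Sum>i<Suc R. sp_smul (of_int (k i) * sp_nalpha (Suc R) n i) (sp_simple_coroot (Suc R) i)) j"
      unfolding Ysc_elem[OF n]
    proof (cases "j < Suc R")
      case True
      then show "D j = of_nat N * of_int (\<Sum>i<Suc R. k i * cf (Suc R) i j)"
        using cf_sum[OF True ev] M unfolding k_def by simp
    next
      case False
      then have "D j = 0" using DY unfolding sp_Y_def by auto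
      then show "D j = of_nat N * of_int (\<Sum>i<Suc R. k i * cf (Suc R) i j)"
        using False by (simp add: cf_out)
    qed
  qed
  then show ?thesis unfolding sp_Ysc_def by blast
qed

lemma key:
  assumes n: "n = 2 * N" and Nev: "even N" and Npos: "N > 0" and r: "r = Suc R"
    and y: "y \<in> sp_Y r" and w: "w \<in> sp_Weyl r"
    and D: "sp_twisted r w y - y \<in> sp_YQn r n"
  shows "sp_twisted r w y - y \<in> sp_Ysc r n"
proof -
  define D where "D = sp_twisted r w y - y"
  have DY: "D \<in> sp_Y r" and "\<forall>i. \<exists>m::int. D i = of_nat N * of_int m"
    using D YQn_char[OF n] unfolding D_def by auto
  then obtain M where M: "\<And>i. D i = of_nat N * of_int (M i)" by metis
  define v where "v = y - sp_rho r"
  have wv: "w v = v - sp_smul (-1) D"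
    unfolding v_def D_def sp_twisted_def sp_smul_def by (simp add: fun_eq_iff)
  have "sp_Q r v = sp_Q r (w v)" using weyl_Q[OF w] by simp
  also have "\<dots> = sp_Q r v + 2 * sp_pair r D v + sp_Q r D"
    unfolding wv Q_sub by simp
  finally have eq: "2 * sp_pair r D v + sp_Q r D = 0" by simp
  define Yi where "Yi i = \<lfloor>y i\<rfloor>" for i
  define U where "U i = 2 * Yi i - 2 * int (r - i) + 1" for i
  have yi: "y i = of_int (Yi i)" for i using y unfolding sp_Y_def Yi_def by auto
  have vi: "2 * v i = of_int (U i)" if "i < r" for i
    using that unfolding v_def U_def by (simp add: rho_val yi of_nat_diff)
  have "2 * sp_pair r D v = (\<Sum>i<r. of_nat N * of_int (M i) * (2 * v i))"
    unfolding sp_pair_def M by (simp add: sum_distrib_left algebra_simps)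
  also have "\<dots> = of_nat N * of_int (\<Sum>i<r. M i * U i)"
    by (simp add: sum_distrib_left) (intro sum.cong refl, simp add: vi)
  finally have p1: "2 * sp_pair r D v = of_nat N * of_int (\<Sum>i<r. M i * U i)" .
  have p2: "sp_Q r D = of_nat N * of_int (int N * (\<Sum>i<r. (M i)^2))"
    unfolding sp_Q_def M by (simp add: sum_distrib_left power_mult_distrib power2_eq_square algebra_simps)
  have "of_nat N * of_int ((\<Sum>i<r. M i * U i) + int N * (\<Sum>i<r. (M i)^2)) = (0::rat)"
    using eq p1 p2 by (simp add: distrib_left)
  then have "of_int ((\<Sum>i<r. M i * U i) + int N * (\<Sum>i<r. (M i)^2)) = (0::rat)"
    using Npos by (metis mult_eq_0_iff of_nat_eq_0_iff not_gr0)
  then have z: "(\<Sum>i<r. M i * U i) + int N * (\<Sum>i<r. (M i)^2) = 0"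
    by (simp only: of_int_eq_0_iff)
  have e1: "even (\<Sum>i<r. M i * U i)"
  proof -
    have "even (int N * (\<Sum>i<r. (M i)^2))" using Nev by simp
    then show ?thesis using z by (metis add.commute add_eq_0_iff even_minus)
  qed
  have e2: "even (\<Sum>i<r. M i * (U i - 1))"
    unfolding U_def by (intro dvd_sum) simp
  have "(\<Sum>i<r. M i) = (\<Sum>i<r. M i * U i) - (\<Sum>i<r. M i * (U i - 1))"
    by (simp add: sum_subtractf[symmetric] algebra_simps)
  then have ev: "even (\<Sum>i<Suc R. M i)" using e1 e2 r by simp
  show ?thesis
    using Ysc_sup[OF n _ M ev] DY r unfolding D_def by (simp only:)
qed

theorem lemma3p4:
  fixes r n :: nat
  assumes "r \<ge> 1" and "n > 0" and "4 dvd n"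
  shows "sp_persistent r n"
proof -
  define N where "N = n div 2"
  have n: "n = 2 * N" unfolding N_def using assms(3) by presburger
  have Nev: "even N" unfolding N_def using assms(3) by presburger
  have Npos: "N > 0" using n assms(2) by simp
  obtain R where r: "r = Suc R" using assms(1) by (cases r) auto
  show ?thesis
    unfolding sp_persistent_def sp_stab_def
    using key[OF n Nev Npos r] Ysc_sub[OF n] by blast
qed

end
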